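(* Let $G$ be a countable graph. Suppose that some connected component $H$ of $G$ has infinitely many pairwise non-isomorphic connected graphs equimorphic to $H$. Then $G$ has infinitely many pairwise non-isomorphic siblings, and if $G$ has at least two connected components, then infinitely many pairwise non-isomorphic siblings of $G$ are disconnected.
   Context: Graphs are undirected and loopless. $G$ embeds into $G'$ if $G$ is isomorphic to an induced subgraph of $G'$; $G,G'$ are equimorphic if each embeds into the other; a sibling of $G$ is a graph equimorphic to $G$. *)

theory Defs
  imports Main "HOL-Library.Countable_Set"
begin

type_synonym 'a ugraph = "'a set \<times> ('a \<times> 'a) set"

abbreviation verts :: "'a ugraph \<Rightarrow> 'a set" where "verts G \<equiv> fst G"
abbreviation edges :: "'a ugraph \<Rightarrow> ('a \<times> 'a) set" where "edges G \<equiv> snd G"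

definition graph :: "'a ugraph \<Rightarrow> bool" where
  "graph G \<longleftrightarrow> edges G \<subseteq> verts G \<times> verts G \<and> sym (edges G)
     \<and> (\<forall>x. (x, x) \<notin> edges G)"

definition embeds :: "'a ugraph \<Rightarrow> 'b ugraph \<Rightarrow> bool" where
  "embeds G G' \<longleftrightarrow> (\<exists>f. inj_on f (verts G) \<and> f ` verts G \<subseteq> verts G' \<and>
     (\<forall>x\<in>verts G. \<forall>y\<in>verts G. (x, y) \<in> edges G \<longleftrightarrow> (f x, f y) \<in> edges G'))"

definition equimorphic :: "'a ugraph \<Rightarrow> 'b ugraph \<Rightarrow> bool" where
  "equimorphic G G' \<longleftrightarrow> embeds G G' \<and> embeds G' G"

definition isomorphic :: "'a ugraph \<Rightarrow> 'b ugraph \<Rightarrow> bool" where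
  "isomorphic G G' \<longleftrightarrow> (\<exists>f. bij_betw f (verts G) (verts G') \<and>
     (\<forall>x\<in>verts G. \<forall>y\<in>verts G. (x, y) \<in> edges G \<longleftrightarrow> (f x, f y) \<in> edges G'))"

definition connected_graph :: "'a ugraph \<Rightarrow> bool" where
  "connected_graph G \<longleftrightarrow> verts G \<noteq> {} \<and>
     (\<forall>x\<in>verts G. \<forall>y\<in>verts G. (x, y) \<in> (edges G)\<^sup>*)"

definition induced_subgraph :: "'a ugraph \<Rightarrow> 'a set \<Rightarrow> 'a ugraph" where
  "induced_subgraph G C = (C, edges G \<inter> (C \<times> C))"

definition component_sets :: "'a ugraph \<Rightarrow> 'a set set" where
  "component_sets G = {{y \<in> verts G. (x, y) \<in> (edges G)\<^sup>*} | x. x \<in> verts G}"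

definition components :: "'a ugraph \<Rightarrow> 'a ugraph set" where
  "components G = induced_subgraph G ` component_sets G"

end

theory Submission
  imports Defs
begin

definition closedg :: "'a ugraph \<Rightarrow> 'a set \<Rightarrow> bool" where
  "closedg X A \<longleftrightarrow> A \<subseteq> verts X \<and> (\<forall>x\<in>A. \<forall>y. (x, y) \<in> edges X \<longrightarrow> y \<in> A)"

definition has_comp :: "'a ugraph \<Rightarrow> 'b ugraph \<Rightarrow> bool" where
  "has_comp X K \<longleftrightarrow> (\<exists>A. closedg X A \<and> isomorphic K (induced_subgraph X A))"

lemma iso_sym:
  assumes "isomorphic X Y" shows "isomorphic Y X"
proof -
  obtain f where f: "bij_betw f (verts X) (verts Y)"
    and e: "\<forall>x\<in>verts X. \<forall>y\<in>verts X. (x, y) \<in> edges X \<longleftrightarrow> (f x, f y) \<in> edges Y"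
    using assms unfolding isomorphic_def by blast
  let ?g = "inv_into (verts X) f"
  have g: "bij_betw ?g (verts Y) (verts X)" using f by (rule bij_betw_inv_into)
  have "\<forall>x\<in>verts Y. \<forall>y\<in>verts Y. (x, y) \<in> edges Y \<longleftrightarrow> (?g x, ?g y) \<in> edges X"
  proof (intro ballI)
    fix x y assume x: "x \<in> verts Y" and y: "y \<in> verts Y"
    have "?g x \<in> verts X" "?g y \<in> verts X" using g x y bij_betwE by blast+
    moreover have "f (?g x) = x" "f (?g y) = y" using f x y
      by (meson bij_betw_inv_into_right)+
    ultimately show "(x, y) \<in> edges Y \<longleftrightarrow> (?g x, ?g y) \<in> edges X" using e by metis
  qed
  then show ?thesis using g unfolding isomorphic_def by blast
qed

lemma iso_trans:
  assumes "isomorphic X Y" "isomorphic Y Z" shows "isomorphic X Z"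
proof -
  obtain f where f: "bij_betw f (verts X) (verts Y)"
    and e: "\<forall>x\<in>verts X. \<forall>y\<in>verts X. (x, y) \<in> edges X \<longleftrightarrow> (f x, f y) \<in> edges Y"
    using assms(1) unfolding isomorphic_def by blast
  obtain g where g: "bij_betw g (verts Y) (verts Z)"
    and e2: "\<forall>x\<in>verts Y. \<forall>y\<in>verts Y. (x, y) \<in> edges Y \<longleftrightarrow> (g x, g y) \<in> edges Z"
    using assms(2) unfolding isomorphic_def by blast
  have "bij_betw (g \<circ> f) (verts X) (verts Z)" using f g by (rule bij_betw_trans)
  moreover have "\<forall>x\<in>verts X. \<forall>y\<in>verts X. (x, y) \<in> edges X \<longleftrightarrow> ((g \<circ> f) x, (g \<circ> f) y) \<in> edges Z"
  proof (intro ballI)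
    fix x y assume xy: "x \<in> verts X" "y \<in> verts X"
    then have "f x \<in> verts Y" "f y \<in> verts Y" using f bij_betwE by blast+
    then show "(x, y) \<in> edges X \<longleftrightarrow> ((g \<circ> f) x, (g \<circ> f) y) \<in> edges Z"
      using e e2 xy by simp
  qed
  ultimately show ?thesis unfolding isomorphic_def by blast
qed

lemma iso_embeds: "isomorphic X Y \<Longrightarrow> embeds X Y"
  unfolding isomorphic_def embeds_def bij_betw_def by blast

lemma embeds_trans:
  assumes "embeds X Y" "embeds Y Z" shows "embeds X Z"
proof -
  obtain f where f: "inj_on f (verts X)" "f ` verts X \<subseteq> verts Y"
    and e: "\<forall>x\<in>verts X. \<forall>y\<in>verts X. (x, y) \<in> edges X \<longleftrightarrow> (f x, f y) \<in> edges Y"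
    using assms(1) unfolding embeds_def by blast
  obtain g where g: "inj_on g (verts Y)" "g ` verts Y \<subseteq> verts Z"
    and e2: "\<forall>x\<in>verts Y. \<forall>y\<in>verts Y. (x, y) \<in> edges Y \<longleftrightarrow> (g x, g y) \<in> edges Z"
    using assms(2) unfolding embeds_def by blast
  have "inj_on (g \<circ> f) (verts X)" by (rule comp_inj_on[OF f(1) inj_on_subset[OF g(1) f(2)]])
  moreover have "(g \<circ> f) ` verts X \<subseteq> verts Z" using f g by fastforce
  moreover have "\<forall>x\<in>verts X. \<forall>y\<in>verts X. (x, y) \<in> edges X \<longleftrightarrow> ((g \<circ> f) x, (g \<circ> f) y) \<in> edges Z"
  proof (intro ballI)
    fix x y assume xy: "x \<in> verts X" "y \<in> verts X"
    then have "f x \<in> verts Y" "f y \<in> verts Y" using f by blast+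
    then show "(x, y) \<in> edges X \<longleftrightarrow> ((g \<circ> f) x, (g \<circ> f) y) \<in> edges Z"
      using e e2 xy by simp
  qed
  ultimately show ?thesis unfolding embeds_def by blast
qed

lemma equi_trans: "equimorphic X Y \<Longrightarrow> equimorphic Y Z \<Longrightarrow> equimorphic X Z"
  unfolding equimorphic_def by (meson embeds_trans)

lemma equi_sym: "equimorphic X Y \<Longrightarrow> equimorphic Y X"
  unfolding equimorphic_def by blast

lemma iso_equi: "isomorphic X Y \<Longrightarrow> equimorphic X Y"
  proof -
  assume a: "isomorphic X Y"
  have "embeds Y X" using iso_sym[OF a] by (rule iso_embeds)
  then show ?thesis using iso_embeds[OF a] unfolding equimorphic_def by simp
qed

lemma iso_connected:
  assumes "isomorphic X Y" "connected_graph X" "graph X" shows "connected_graph Y"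
proof -
  obtain f where f: "bij_betw f (verts X) (verts Y)"
    and e: "\<forall>x\<in>verts X. \<forall>y\<in>verts X. (x, y) \<in> edges X \<longleftrightarrow> (f x, f y) \<in> edges Y"
    using assms unfolding isomorphic_def by blast
  have ne: "verts Y \<noteq> {}" using assms(2) f unfolding connected_graph_def bij_betw_def by auto
  have path: "(x, y) \<in> (edges X)\<^sup>* \<Longrightarrow> x \<in> verts X \<Longrightarrow> (f x, f y) \<in> (edges Y)\<^sup>*" for x y
  proof (induction rule: rtrancl_induct)
    case base then show ?case by simp
  next
    case (step y z)
    have "y \<in> verts X" "z \<in> verts X" using step(2) assms(3) unfolding graph_def by auto
    then have "(f y, f z) \<in> edges Y" using e step(2) by blast
    then show ?case using step by (meson rtrancl.rtrancl_into_rtrancl)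
  qed
  have "\<forall>x\<in>verts Y. \<forall>y\<in>verts Y. (x, y) \<in> (edges Y)\<^sup>*"
  proof (intro ballI)
    fix x y assume "x \<in> verts Y" "y \<in> verts Y"
    then have "x \<in> f ` verts X" "y \<in> f ` verts X" using f unfolding bij_betw_def by simp_all
    then obtain a b where "a \<in> verts X" "b \<in> verts X" "x = f a" "y = f b"
      by blast
    then show "(x, y) \<in> (edges Y)\<^sup>*" using path assms(2) unfolding connected_graph_def by blast
  qed
  then show ?thesis using ne unfolding connected_graph_def by blast
qed

lemma induced_graph: "graph X \<Longrightarrow> graph (induced_subgraph X A)"
  unfolding graph_def induced_subgraph_def sym_def by auto

lemma iso_induced:
  assumes "isomorphic X Y" "graph Y" "A \<subseteq> verts X"
  shows "\<exists>B. B \<subseteq> verts Y \<and> isomorphic (induced_subgraph X A) (induced_subgraph Y B)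
     \<and> (closedg X A \<longrightarrow> closedg Y B)"
proof -
  obtain f where f: "bij_betw f (verts X) (verts Y)"
    and e: "\<forall>x\<in>verts X. \<forall>y\<in>verts X. (x, y) \<in> edges X \<longleftrightarrow> (f x, f y) \<in> edges Y"
    using assms unfolding isomorphic_def by blast
  have b: "bij_betw f A (f ` A)" using f assms(3) by (meson bij_betw_def bij_betw_subset)
  have "\<forall>x\<in>A. \<forall>y\<in>A. (x, y) \<in> edges X \<inter> A \<times> A \<longleftrightarrow> (f x, f y) \<in> edges Y \<inter> f ` A \<times> f ` A"
    using e assms(3) by blast
  then have "isomorphic (induced_subgraph X A) (induced_subgraph Y (f ` A))"
    unfolding isomorphic_def induced_subgraph_def fst_conv snd_conv using b by blast
  moreover have "f ` A \<subseteq> verts Y" using f assms(3) unfolding bij_betw_def by blast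
  moreover have "closedg Y (f ` A)" if c: "closedg X A"
    unfolding closedg_def
  proof (intro conjI ballI allI impI)
    show "f ` A \<subseteq> verts Y" using f assms(3) unfolding bij_betw_def by blast
    fix x' y' assume x': "x' \<in> f ` A" and xy: "(x', y') \<in> edges Y"
    then obtain x where x: "x \<in> A" "x' = f x" by blast
    have "y' \<in> verts Y" using xy assms(2) unfolding graph_def by auto
    then obtain y where y: "y \<in> verts X" "y' = f y" using f unfolding bij_betw_def by auto
    have "(x, y) \<in> edges X" using e x y xy assms(3) by blast
    then have "y \<in> A" using c x unfolding closedg_def by blast
    then show "y' \<in> f ` A" using y by blast
  qed
  ultimately show ?thesis by blast
qed

lemma has_comp_iso:
  assumes "has_comp X K" "isomorphic X Y" "graph Y"
  shows "has_comp Y K"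
proof -
  obtain A where A: "closedg X A" "isomorphic K (induced_subgraph X A)"
    using assms(1) unfolding has_comp_def by blast
  have "A \<subseteq> verts X" using A(1) unfolding closedg_def by blast
  from iso_induced[OF assms(2,3) this] A(1)
  obtain B where "isomorphic (induced_subgraph X A) (induced_subgraph Y B)" "closedg Y B"
    by blast
  moreover have "isomorphic K (induced_subgraph Y B)"
    using iso_trans[OF A(2) calculation(1)] .
  ultimately show ?thesis unfolding has_comp_def by blast
qed


definition cset :: "'a ugraph \<Rightarrow> 'a \<Rightarrow> 'a set" where
  "cset G x = {y \<in> verts G. (x, y) \<in> (edges G)\<^sup>*}"

lemma comp_sets: "component_sets G = cset G ` verts G"
  unfolding component_sets_def cset_def by blast

lemma closed_path:
  assumes "closedg X A" "x \<in> A" "(x, y) \<in> (edges X)\<^sup>*" shows "y \<in> A"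
  using assms(3,2)
proof (induction rule: rtrancl_induct)
  case base then show ?case .
next
  case (step y z) then show ?case using assms(1) unfolding closedg_def by blast
qed

lemma not_connected:
  assumes "closedg X A" "x \<in> A" "y \<in> verts X" "y \<notin> A" shows "\<not> connected_graph X"
proof
  assume "connected_graph X"
  then have "(x, y) \<in> (edges X)\<^sup>*" using assms unfolding connected_graph_def closedg_def by blast
  then show False using closed_path[OF assms(1,2)] assms(4) by blast
qed

lemma closed_conn_full:
  assumes "connected_graph X" "closedg X A" "A \<noteq> {}" shows "A = verts X"
proof -
  obtain x where "x \<in> A" using assms(3) by blast
  then show ?thesis using not_connected[OF assms(2)] assms(1,2) unfolding closedg_def by blast
qed

lemma comp_self: "x \<in> verts G \<Longrightarrow> x \<in> cset G x"
  unfolding cset_def by simp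

lemma reach_in:
  assumes "graph G" "(x, y) \<in> (edges G)\<^sup>*" "x \<in> verts G" shows "y \<in> verts G"
  using assms(2,3)
proof (induction rule: rtrancl_induct)
  case base then show ?case .
next
  case (step y z) then show ?case using assms(1) unfolding graph_def by blast
qed

lemma comp_closed:
  assumes "graph G" "x \<in> verts G" shows "closedg G (cset G x)"
  unfolding closedg_def
proof (intro conjI ballI allI impI)
  show "cset G x \<subseteq> verts G" unfolding cset_def by blast
  fix y z assume y: "y \<in> cset G x" and yz: "(y, z) \<in> edges G"
  have "(x, y) \<in> (edges G)\<^sup>*" using y unfolding cset_def by blast
  then have "(x, z) \<in> (edges G)\<^sup>*" using yz by (rule rtrancl.rtrancl_into_rtrancl)
  moreover have "z \<in> verts G" using yz assms(1) unfolding graph_def by blast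
  ultimately show "z \<in> cset G x" unfolding cset_def by blast
qed

lemma comp_connected:
  assumes "graph G" "x \<in> verts G" shows "connected_graph (induced_subgraph G (cset G x))"
proof -
  let ?C = "cset G x"
  let ?E = "edges G \<inter> ?C \<times> ?C"
  have p: "(x, y) \<in> ?E\<^sup>*" if "y \<in> ?C" for y
  proof -
    have "(x, y) \<in> (edges G)\<^sup>*" using that unfolding cset_def by blast
    then show ?thesis
    proof (induction rule: rtrancl_induct)
      case base then show ?case by simp
    next
      case (step y z)
      have xz: "(x, z) \<in> (edges G)\<^sup>*" using step(1,2) by (rule rtrancl.rtrancl_into_rtrancl)
      have "z \<in> ?C" using reach_in[OF assms(1) xz assms(2)] xz unfolding cset_def by blast
      moreover have "y \<in> ?C" using step(1) reach_in[OF assms(1) _ assms(2)] unfolding cset_def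
        by blast
      ultimately have "(y, z) \<in> ?E" using step(2) by blast
      with step(3) show ?case by (rule rtrancl.rtrancl_into_rtrancl)
    qed
  qed
  have "sym ?E" using assms(1) unfolding graph_def sym_def by blast
  then have s: "sym (?E\<^sup>*)" by (rule sym_rtrancl)
  have "(y, z) \<in> ?E\<^sup>*" if "y \<in> ?C" "z \<in> ?C" for y z
  proof -
    have "(y, x) \<in> ?E\<^sup>*" using p[OF that(1)] s unfolding sym_def by blast
    then show ?thesis using p[OF that(2)] by (meson rtrancl_trans)
  qed
  moreover have "?C \<noteq> {}" using comp_self[OF assms(2)] by blast
  ultimately show ?thesis unfolding connected_graph_def induced_subgraph_def by simp
qed

lemma closed_conn_comp:
  assumes "graph G" "closedg G A" "connected_graph (induced_subgraph G A)" "x \<in> A"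
  shows "A = cset G x"
proof
  have xv: "x \<in> verts G" using assms(2,4) unfolding closedg_def by blast
  show "A \<subseteq> cset G x"
  proof
    fix y assume y: "y \<in> A"
    have "(x, y) \<in> (edges G \<inter> A \<times> A)\<^sup>*" using assms(3,4) y
      unfolding connected_graph_def induced_subgraph_def by simp
    then have "(x, y) \<in> (edges G)\<^sup>*" using rtrancl_mono[of "edges G \<inter> A \<times> A" "edges G"] by blast
    then show "y \<in> cset G x" using y assms(2) unfolding cset_def closedg_def by blast
  qed
  show "cset G x \<subseteq> A" using closed_path[OF assms(2,4)] unfolding cset_def by blast
qed

lemma comp_eq:
  assumes "graph G" "C \<in> component_sets G" "z \<in> C" shows "C = cset G z"
proof -
  obtain x where x: "x \<in> verts G" "C = cset G x" using assms(2) unfolding comp_sets by blast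
  show ?thesis using closed_conn_comp[OF assms(1) comp_closed[OF assms(1) x(1)]
      comp_connected[OF assms(1) x(1)]] assms(3) x(2) by blast
qed

lemma comp_sets_closed: "graph G \<Longrightarrow> C \<in> component_sets G \<Longrightarrow> closedg G C"
  unfolding comp_sets by (auto intro: comp_closed)

lemma comp_sets_conn: "graph G \<Longrightarrow> C \<in> component_sets G \<Longrightarrow> connected_graph (induced_subgraph G C)"
  unfolding comp_sets by (auto intro: comp_connected)

lemma comp_sets_ne: "C \<in> component_sets G \<Longrightarrow> C \<noteq> {}"
  unfolding comp_sets by (auto dest: comp_self)

lemma comp_sets_char:
  assumes "graph G" "closedg G A" "connected_graph (induced_subgraph G A)"
  shows "A \<in> component_sets G"
proof -
  have "A \<noteq> {}" using assms(3) unfolding connected_graph_def induced_subgraph_def by simp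
  then obtain x where x: "x \<in> A" by blast
  then have "x \<in> verts G" using assms(2) unfolding closedg_def by blast
  then show ?thesis using closed_conn_comp[OF assms x] unfolding comp_sets by blast
qed


definition relabel :: "('a \<Rightarrow> 'b) \<Rightarrow> 'a ugraph \<Rightarrow> 'b ugraph" where
  "relabel f X = (f ` verts X, map_prod f f ` edges X)"

lemma relabel_iso:
  assumes "inj_on f (verts X)" "graph X" shows "isomorphic X (relabel f X)"
proof -
  have b: "bij_betw f (verts X) (verts (relabel f X))"
    using assms(1) unfolding relabel_def bij_betw_def by simp
  have "(x, y) \<in> edges X \<longleftrightarrow> (f x, f y) \<in> edges (relabel f X)"
    if "x \<in> verts X" "y \<in> verts X" for x y
  proof
    assume "(x, y) \<in> edges X" then show "(f x, f y) \<in> edges (relabel f X)"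
      unfolding relabel_def by force
  next
    assume "(f x, f y) \<in> edges (relabel f X)"
    then obtain a b where ab: "(a, b) \<in> edges X" "f a = f x" "f b = f y"
      unfolding relabel_def by auto
    have "a \<in> verts X" "b \<in> verts X" using ab(1) assms(2) unfolding graph_def by auto
    then have "a = x" "b = y" using ab that assms(1) unfolding inj_on_def by auto
    then show "(x, y) \<in> edges X" using ab(1) by simp
  qed
  then show ?thesis using b unfolding isomorphic_def by blast
qed

lemma relabel_graph:
  assumes "inj_on f (verts X)" "graph X" shows "graph (relabel f X)"
proof -
  have e: "edges X \<subseteq> verts X \<times> verts X" and s: "sym (edges X)" and l: "\<forall>x. (x, x) \<notin> edges X"
    using assms(2) unfolding graph_def by auto
  have "edges (relabel f X) \<subseteq> verts (relabel f X) \<times> verts (relabel f X)"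
    using e unfolding relabel_def by auto
  moreover have "sym (edges (relabel f X))"
    using s unfolding relabel_def sym_def by auto
  moreover have "(z, z) \<notin> edges (relabel f X)" for z
  proof
    assume "(z, z) \<in> edges (relabel f X)"
    then obtain a b where ab: "(a, b) \<in> edges X" "f a = z" "f b = z"
      unfolding relabel_def by auto
    have "a \<in> verts X" "b \<in> verts X" using ab(1) e by auto
    then have "a = b" using ab assms(1) unfolding inj_on_def by auto
    then show False using ab(1) l by simp
  qed
  ultimately show ?thesis unfolding graph_def by blast
qed

lemma to_nat_graph:
  fixes X :: "'c ugraph"
  assumes "graph X" "countable (verts X)"
  shows "\<exists>Y :: nat ugraph. graph Y \<and> isomorphic X Y"
proof -
  have i: "inj_on (to_nat_on (verts X)) (verts X)" using assms(2) by (rule inj_on_to_nat_on)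
  show ?thesis using relabel_graph[OF i assms(1)] relabel_iso[OF i assms(1)] by blast
qed

lemma iso_refl: "isomorphic X X"
  unfolding isomorphic_def by (rule exI[of _ id]) simp

definition repl :: "'a ugraph \<Rightarrow> 'a set set \<Rightarrow> ('a set \<Rightarrow> 'b ugraph) \<Rightarrow> ('a + 'b \<times> 'a set) ugraph" where
  "repl G CC F = (Inl ` (verts G - \<Union>CC) \<union> (\<Union>C\<in>CC. (\<lambda>b. Inr (b, C)) ` verts (F C)),
     {(Inl x, Inl y) | x y. (x, y) \<in> edges G \<and> x \<notin> \<Union>CC \<and> y \<notin> \<Union>CC} \<union>
     {(Inr (a, C), Inr (b, C)) | a b C. C \<in> CC \<and> (a, b) \<in> edges (F C)})"

definition copy :: "('a set \<Rightarrow> 'b ugraph) \<Rightarrow> 'a set \<Rightarrow> ('a + 'b \<times> 'a set) set" where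
  "copy F C = (\<lambda>b. Inr (b, C)) ` verts (F C)"

lemma repl_v_Inl[simp]: "Inl x \<in> verts (repl G CC F) \<longleftrightarrow> x \<in> verts G \<and> x \<notin> \<Union>CC"
  unfolding repl_def by auto
lemma repl_v_Inr[simp]: "Inr p \<in> verts (repl G CC F) \<longleftrightarrow> snd p \<in> CC \<and> fst p \<in> verts (F (snd p))"
  unfolding repl_def by (cases p) auto
lemma repl_e_LL[simp]: "(Inl x, Inl y) \<in> edges (repl G CC F) \<longleftrightarrow> (x, y) \<in> edges G \<and> x \<notin> \<Union>CC \<and> y \<notin> \<Union>CC"
  unfolding repl_def by auto
lemma repl_e_RR[simp]: "(Inr p, Inr q) \<in> edges (repl G CC F) \<longleftrightarrow> snd p = snd q \<and> snd p \<in> CC \<and> (fst p, fst q) \<in> edges (F (snd p))"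
  unfolding repl_def by (cases p; cases q) auto
lemma repl_e_LR[simp]: "(Inl x, Inr p) \<notin> edges (repl G CC F)"
  unfolding repl_def by auto
lemma repl_e_RL[simp]: "(Inr p, Inl x) \<notin> edges (repl G CC F)"
  unfolding repl_def by auto


locale rctx =
  fixes G :: "'a ugraph" and CC :: "'a set set" and F :: "'a set \<Rightarrow> 'b ugraph"
  assumes g: "graph G" and cc: "CC \<subseteq> component_sets G"
    and fg: "\<And>C. C \<in> CC \<Longrightarrow> graph (F C)"
    and fc: "\<And>C. C \<in> CC \<Longrightarrow> connected_graph (F C)"
    and fe: "\<And>C. C \<in> CC \<Longrightarrow> equimorphic (F C) (induced_subgraph G C)"
begin

abbreviation "R \<equiv> repl G CC F"

lemma gE: "(x, y) \<in> edges G \<Longrightarrow> x \<in> verts G \<and> y \<in> verts G"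
  using g unfolding graph_def by auto

lemma gsym: "(x, y) \<in> edges G \<Longrightarrow> (y, x) \<in> edges G"
  using g unfolding graph_def sym_def by auto

lemma cs_closed: "C \<in> component_sets G \<Longrightarrow> x \<in> C \<Longrightarrow> (x, y) \<in> edges G \<Longrightarrow> y \<in> C"
  using comp_sets_closed[OF g] unfolding closedg_def by blast

lemma cs_closed2: "C \<in> component_sets G \<Longrightarrow> y \<in> C \<Longrightarrow> (x, y) \<in> edges G \<Longrightarrow> x \<in> C"
  using cs_closed gsym by blast

lemma cs_disj: "C \<in> component_sets G \<Longrightarrow> D \<in> component_sets G \<Longrightarrow> x \<in> C \<Longrightarrow> x \<in> D \<Longrightarrow> C = D"
  using comp_eq[OF g] by metis

lemma cs_sub: "C \<in> component_sets G \<Longrightarrow> C \<subseteq> verts G"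
  using comp_sets_closed[OF g] unfolding closedg_def by blast

lemma CCcs: "C \<in> CC \<Longrightarrow> C \<in> component_sets G"
  using cc by blast

lemma out_edge: "(x, y) \<in> edges G \<Longrightarrow> x \<notin> \<Union>CC \<Longrightarrow> y \<notin> \<Union>CC"
  using cs_closed2 CCcs by blast

lemma fE: "C \<in> CC \<Longrightarrow> (a, b) \<in> edges (F C) \<Longrightarrow> a \<in> verts (F C) \<and> b \<in> verts (F C)"
  using fg unfolding graph_def by blast

lemma R_edges: "(u, w) \<in> edges R \<Longrightarrow> u \<in> verts R \<and> w \<in> verts R"
proof (cases u; cases w)
  fix x y assume "(u, w) \<in> edges R" "u = Inl x" "w = Inl y"
  then show ?thesis by (auto dest: gE)
next
  fix p q assume "(u, w) \<in> edges R" "u = Inr p" "w = Inr q"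
  then show ?thesis by (auto dest: fE)
qed auto

lemma R_sym: "(u, w) \<in> edges R \<Longrightarrow> (w, u) \<in> edges R"
proof (cases u; cases w)
  fix x y assume "(u, w) \<in> edges R" "u = Inl x" "w = Inl y"
  then show ?thesis by (auto dest: gsym)
next
  fix p q assume a: "(u, w) \<in> edges R" "u = Inr p" "w = Inr q"
  then have "sym (edges (F (snd p)))" using fg unfolding graph_def by auto
  then show ?thesis using a unfolding sym_def by auto
qed auto

lemma R_loop: "(z, z) \<notin> edges R"
proof (cases z)
  case (Inl x) then show ?thesis using g unfolding graph_def by auto
next
  case (Inr p)
  show ?thesis
  proof
    assume "(z, z) \<in> edges R"
    then have "snd p \<in> CC" "(fst p, fst p) \<in> edges (F (snd p))" using Inr by auto
    then show False using fg unfolding graph_def by blast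
  qed
qed

lemma R_graph: "graph R"
  unfolding graph_def sym_def using R_edges R_sym R_loop by auto


definition emb :: "'a set \<Rightarrow> 'a \<Rightarrow> 'b" where
  "emb C = (SOME f. inj_on f C \<and> f ` C \<subseteq> verts (F C) \<and>
     (\<forall>x\<in>C. \<forall>y\<in>C. (x, y) \<in> edges G \<inter> C \<times> C \<longleftrightarrow> (f x, f y) \<in> edges (F C)))"

definition bk :: "'a set \<Rightarrow> 'b \<Rightarrow> 'a" where
  "bk C = (SOME f. inj_on f (verts (F C)) \<and> f ` verts (F C) \<subseteq> C \<and>
     (\<forall>x\<in>verts (F C). \<forall>y\<in>verts (F C). (x, y) \<in> edges (F C) \<longleftrightarrow> (f x, f y) \<in> edges G \<inter> C \<times> C))"

lemma emb_prop:
  assumes "C \<in> CC"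
  shows "inj_on (emb C) C \<and> emb C ` C \<subseteq> verts (F C) \<and>
     (\<forall>x\<in>C. \<forall>y\<in>C. (x, y) \<in> edges G \<inter> C \<times> C \<longleftrightarrow> (emb C x, emb C y) \<in> edges (F C))"
proof -
  have "embeds (induced_subgraph G C) (F C)" using fe[OF assms] unfolding equimorphic_def by blast
  then have "\<exists>f. inj_on f C \<and> f ` C \<subseteq> verts (F C) \<and>
     (\<forall>x\<in>C. \<forall>y\<in>C. (x, y) \<in> edges G \<inter> C \<times> C \<longleftrightarrow> (f x, f y) \<in> edges (F C))"
    unfolding embeds_def induced_subgraph_def by simp
  then show ?thesis unfolding emb_def by (rule someI_ex)
qed

lemma bk_prop:
  assumes "C \<in> CC"
  shows "inj_on (bk C) (verts (F C)) \<and> bk C ` verts (F C) \<subseteq> C \<and>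
     (\<forall>x\<in>verts (F C). \<forall>y\<in>verts (F C). (x, y) \<in> edges (F C) \<longleftrightarrow> (bk C x, bk C y) \<in> edges G \<inter> C \<times> C)"
proof -
  have "embeds (F C) (induced_subgraph G C)" using fe[OF assms] unfolding equimorphic_def by blast
  then have "\<exists>f. inj_on f (verts (F C)) \<and> f ` verts (F C) \<subseteq> C \<and>
     (\<forall>x\<in>verts (F C). \<forall>y\<in>verts (F C). (x, y) \<in> edges (F C) \<longleftrightarrow> (f x, f y) \<in> edges G \<inter> C \<times> C)"
    unfolding embeds_def induced_subgraph_def by simp
  then show ?thesis unfolding bk_def by (rule someI_ex)
qed

lemma in_CC_cset: "C \<in> CC \<Longrightarrow> v \<in> C \<Longrightarrow> cset G v = C"
  using comp_eq[OF g CCcs] by metis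

lemma cset_CC: "v \<in> verts G \<Longrightarrow> v \<in> \<Union>CC \<longleftrightarrow> cset G v \<in> CC"
proof
  assume "v \<in> \<Union>CC"
  then obtain C where "C \<in> CC" "v \<in> C" by blast
  then show "cset G v \<in> CC" using in_CC_cset by simp
next
  assume "v \<in> verts G" "cset G v \<in> CC"
  then show "v \<in> \<Union>CC" using comp_self[of v G] by blast
qed

definition phi :: "'a \<Rightarrow> 'a + 'b \<times> 'a set" where
  "phi v = (if cset G v \<in> CC then Inr (emb (cset G v) v, cset G v) else Inl v)"

lemma embeds_GR: "embeds G R"
proof -
  have inj: "inj_on phi (verts G)"
  proof (rule inj_onI)
    fix x y assume x: "x \<in> verts G" and y: "y \<in> verts G" and e: "phi x = phi y"
    show "x = y"
    proof (cases "cset G x \<in> CC")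
      case True
      then have "cset G y \<in> CC" and c: "cset G y = cset G x"
        "emb (cset G x) x = emb (cset G x) y" using e unfolding phi_def by (auto split: if_splits)
      moreover have "x \<in> cset G x" "y \<in> cset G x" using comp_self x y c by metis+
      ultimately show ?thesis using emb_prop[OF True] unfolding inj_on_def by blast
    next
      case False
      then show ?thesis using e unfolding phi_def by (auto split: if_splits)
    qed
  qed
  have img: "phi ` verts G \<subseteq> verts R"
  proof
    fix z assume "z \<in> phi ` verts G"
    then obtain v where v: "v \<in> verts G" "z = phi v" by blast
    show "z \<in> verts R"
    proof (cases "cset G v \<in> CC")
      case True
      then have "emb (cset G v) v \<in> verts (F (cset G v))"
        using emb_prop[OF True] comp_self[OF v(1)] by blast
      then show ?thesis using True v unfolding phi_def by simp
    next
      case False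
      then show ?thesis using v cset_CC unfolding phi_def by simp
    qed
  qed
  have ed: "(x, y) \<in> edges G \<longleftrightarrow> (phi x, phi y) \<in> edges R" if x: "x \<in> verts G" and y: "y \<in> verts G" for x y
  proof (cases "cset G x \<in> CC"; cases "cset G y \<in> CC")
    assume cx: "cset G x \<in> CC" and cy: "cset G y \<in> CC"
    show ?thesis
    proof (cases "cset G x = cset G y")
      case True
      have "x \<in> cset G x" "y \<in> cset G x" using comp_self x y True by metis+
      then show ?thesis using emb_prop[OF cx] cx cy True unfolding phi_def by auto
    next
      case False
      have "(x, y) \<notin> edges G"
      proof
        assume "(x, y) \<in> edges G"
        then have "y \<in> cset G x" using cs_closed[OF CCcs[OF cx] comp_self[OF x]] by blast
        then show False using False in_CC_cset[OF cx] by metis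
      qed
      then show ?thesis using False cx cy unfolding phi_def by simp
    qed
  next
    assume cx: "cset G x \<in> CC" and cy: "cset G y \<notin> CC"
    have "(x, y) \<notin> edges G"
    proof
      assume "(x, y) \<in> edges G"
      then have "y \<in> cset G x" using cs_closed[OF CCcs[OF cx] comp_self[OF x]] by blast
      then show False using cy cx in_CC_cset[OF cx] by metis
    qed
    then show ?thesis using cx cy unfolding phi_def by simp
  next
    assume cx: "cset G x \<notin> CC" and cy: "cset G y \<in> CC"
    have "(x, y) \<notin> edges G"
    proof
      assume "(x, y) \<in> edges G"
      then have "x \<in> cset G y" using cs_closed2[OF CCcs[OF cy] comp_self[OF y]] by blast
      then show False using cx cy in_CC_cset[OF cy] by metis
    qed
    then show ?thesis using cx cy unfolding phi_def by simp
  next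
    assume cx: "cset G x \<notin> CC" and cy: "cset G y \<notin> CC"
    then show ?thesis using cset_CC x y unfolding phi_def by simp
  qed
  show ?thesis unfolding embeds_def using inj img ed by blast
qed

definition psi :: "'a + 'b \<times> 'a set \<Rightarrow> 'a" where
  "psi = case_sum id (\<lambda>p. bk (snd p) (fst p))"

lemma psi_Inr: "Inr p \<in> verts R \<Longrightarrow> psi (Inr p) \<in> snd p"
  unfolding psi_def using bk_prop by auto

lemma embeds_RG: "embeds R G"
proof -
  have inj: "inj_on psi (verts R)"
  proof (rule inj_onI)
    fix u w assume u: "u \<in> verts R" and w: "w \<in> verts R" and e: "psi u = psi w"
    show "u = w"
    proof (cases u; cases w)
      fix x y assume "u = Inl x" "w = Inl y" then show ?thesis using e unfolding psi_def by simp
    next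
      fix x q assume a: "u = Inl x" "w = Inr q"
      then have "psi w \<in> snd q" "snd q \<in> CC" using psi_Inr w by auto
      then show ?thesis using a e u unfolding psi_def by auto
    next
      fix p y assume a: "u = Inr p" "w = Inl y"
      then have "psi u \<in> snd p" "snd p \<in> CC" using psi_Inr u by auto
      then show ?thesis using a e w unfolding psi_def by auto
    next
      fix p q assume a: "u = Inr p" "w = Inr q"
      then have pp: "psi u \<in> snd p" "snd p \<in> CC" "psi w \<in> snd q" "snd q \<in> CC" using psi_Inr u w by auto
      have s: "snd p = snd q" using cs_disj[OF CCcs[OF pp(2)] CCcs[OF pp(4)] pp(1)] pp(3) e by simp
      have "fst p \<in> verts (F (snd p))" "fst q \<in> verts (F (snd p))" using a u w s by auto
      then have "fst p = fst q" using bk_prop[OF \<open>snd p \<in> CC\<close>] e a s unfolding psi_def inj_on_def by auto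
      then show ?thesis using a s by (simp add: prod_eq_iff)
    qed
  qed
  have img: "psi ` verts R \<subseteq> verts G"
  proof
    fix z assume "z \<in> psi ` verts R"
    then obtain u where u: "u \<in> verts R" "z = psi u" by blast
    show "z \<in> verts G"
    proof (cases u)
      case (Inl x) then show ?thesis using u unfolding psi_def by simp
    next
      case (Inr p)
      then have "psi u \<in> snd p" "snd p \<in> CC" using psi_Inr u by auto
      then show ?thesis using u cs_sub CCcs by blast
    qed
  qed
  have ed: "(u, w) \<in> edges R \<longleftrightarrow> (psi u, psi w) \<in> edges G" if u: "u \<in> verts R" and w: "w \<in> verts R" for u w
  proof (cases u; cases w)
    fix x y assume "u = Inl x" "w = Inl y" then show ?thesis using u w unfolding psi_def by simp
  next
    fix x q assume a: "u = Inl x" "w = Inr q"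
    then have pp: "psi w \<in> snd q" "snd q \<in> CC" using psi_Inr w by auto
    have "(psi u, psi w) \<notin> edges G"
    proof
      assume "(psi u, psi w) \<in> edges G"
      then have "psi u \<in> snd q" using cs_closed2[OF CCcs[OF pp(2)] pp(1)] by blast
      then show False using a u pp(2) unfolding psi_def by auto
    qed
    then show ?thesis using a by simp
  next
    fix p y assume a: "u = Inr p" "w = Inl y"
    then have pp: "psi u \<in> snd p" "snd p \<in> CC" using psi_Inr u by auto
    have "(psi u, psi w) \<notin> edges G"
    proof
      assume "(psi u, psi w) \<in> edges G"
      then have "psi w \<in> snd p" using cs_closed[OF CCcs[OF pp(2)] pp(1)] by blast
      then show False using a w pp(2) unfolding psi_def by auto
    qed
    then show ?thesis using a by simp
  next
    fix p q assume a: "u = Inr p" "w = Inr q"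
    then have pp: "psi u \<in> snd p" "snd p \<in> CC" "psi w \<in> snd q" "snd q \<in> CC" using psi_Inr u w by auto
    show ?thesis
    proof (cases "snd p = snd q")
      case True
      have "fst p \<in> verts (F (snd p))" "fst q \<in> verts (F (snd p))" using a u w True by auto
      then show ?thesis using bk_prop[OF pp(2)] pp a True unfolding psi_def by auto
    next
      case False
      have "(psi u, psi w) \<notin> edges G"
      proof
        assume "(psi u, psi w) \<in> edges G"
        then have "psi w \<in> snd p" using cs_closed[OF CCcs[OF pp(2)] pp(1)] by blast
        then show False using cs_disj[OF CCcs[OF pp(2)] CCcs[OF pp(4)] _ pp(3)] False by blast
      qed
      then show ?thesis using a False by simp
    qed
  qed
  show ?thesis unfolding embeds_def using inj img ed by blast
qed

lemma R_equi: "equimorphic R G"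
  unfolding equimorphic_def using embeds_RG embeds_GR by blast


definition side :: "'a + 'b \<times> 'a set \<Rightarrow> 'a set option" where
  "side u = (case u of Inl _ \<Rightarrow> None | Inr p \<Rightarrow> Some (snd p))"

lemma side_edge: "(u, w) \<in> edges R \<Longrightarrow> side u = side w"
  by (cases u; cases w) (auto simp: side_def)

lemma side_path: "(u, w) \<in> (edges R)\<^sup>* \<Longrightarrow> side u = side w"
  by (induction rule: rtrancl_induct) (auto dest: side_edge)

lemma side_conn:
  assumes "connected_graph (induced_subgraph R A)" "u \<in> A" "w \<in> A"
  shows "side u = side w"
proof -
  have "(u, w) \<in> (edges R \<inter> A \<times> A)\<^sup>*" using assms unfolding connected_graph_def induced_subgraph_def by simp
  then have "(u, w) \<in> (edges R)\<^sup>*" using rtrancl_mono[of "edges R \<inter> A \<times> A" "edges R"] by blast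
  then show ?thesis by (rule side_path)
qed

lemma R_comp_class:
  assumes cl: "closedg R A" and co: "connected_graph (induced_subgraph R A)"
  shows "(\<exists>D. closedg G D \<and> D \<inter> \<Union>CC = {} \<and> A = Inl ` D) \<or> (\<exists>C\<in>CC. A = copy F C)"
proof -
  have "A \<noteq> {}" using co unfolding connected_graph_def induced_subgraph_def by simp
  then obtain z where z: "z \<in> A" by blast
  have AR: "A \<subseteq> verts R" using cl unfolding closedg_def by blast
  show ?thesis
  proof (cases z)
    case (Inl x)
    have allL: "\<exists>y. w = Inl y" if "w \<in> A" for w
      using side_conn[OF co z that] Inl by (cases w) (auto simp: side_def)
    define D where "D = {y. Inl y \<in> A}"
    have AD: "A = Inl ` D"
    proof
      show "A \<subseteq> Inl ` D" using allL unfolding D_def by force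
      show "Inl ` D \<subseteq> A" unfolding D_def by blast
    qed
    have Dv: "D \<subseteq> verts G - \<Union>CC" using AR unfolding D_def by auto
    have "closedg G D"
      unfolding closedg_def
    proof (intro conjI ballI allI impI)
      show "D \<subseteq> verts G" using Dv by blast
      fix a y assume a: "a \<in> D" and e: "(a, y) \<in> edges G"
      have "a \<notin> \<Union>CC" using a Dv by blast
      then have "y \<notin> \<Union>CC" using out_edge e by blast
      then have "(Inl a, Inl y) \<in> edges R" using e \<open>a \<notin> \<Union>CC\<close> by simp
      then show "y \<in> D" using cl a unfolding closedg_def D_def by blast
    qed
    then show ?thesis using AD Dv by blast
  next
    case (Inr p)
    define C where "C = snd p"
    have CC1: "C \<in> CC" using z AR Inr unfolding C_def by auto
    have allR: "\<exists>b. w = Inr (b, C)" if "w \<in> A" for w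
      using side_conn[OF co z that] Inr unfolding C_def by (cases w) (auto simp: side_def prod_eq_iff)
    define B where "B = {b. Inr (b, C) \<in> A}"
    have "closedg (F C) B"
      unfolding closedg_def
    proof (intro conjI ballI allI impI)
      show "B \<subseteq> verts (F C)" using AR unfolding B_def by auto
      fix a y assume a: "a \<in> B" and e: "(a, y) \<in> edges (F C)"
      then have "(Inr (a, C), Inr (y, C)) \<in> edges R" using CC1 by simp
      then show "y \<in> B" using cl a unfolding closedg_def B_def by blast
    qed
    moreover have "fst p \<in> B" using z Inr unfolding B_def C_def by simp
    ultimately have BV: "B = verts (F C)" using closed_conn_full[OF fc[OF CC1]] by blast
    have "A = copy F C"
    proof
      show "A \<subseteq> copy F C" using allR BV unfolding B_def copy_def by force
      show "copy F C \<subseteq> A" using BV unfolding B_def copy_def by blast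
    qed
    then show ?thesis using CC1 by blast
  qed
qed

lemma iso_image:
  assumes "inj_on f A" "\<forall>x\<in>A. \<forall>y\<in>A. (x, y) \<in> E1 \<longleftrightarrow> (f x, f y) \<in> E2"
  shows "isomorphic (A, E1 \<inter> A \<times> A) (f ` A, E2 \<inter> f ` A \<times> f ` A)"
  unfolding isomorphic_def using assms by (intro exI[of _ f]) (auto simp: bij_betw_def)

lemma copy_comp:
  assumes "C \<in> CC"
  shows "closedg R (copy F C) \<and> isomorphic (F C) (induced_subgraph R (copy F C))"
proof
  show "closedg R (copy F C)"
    unfolding closedg_def
  proof (intro conjI ballI allI impI)
    show "copy F C \<subseteq> verts R" using assms unfolding copy_def by auto
    fix u w assume u: "u \<in> copy F C" and e: "(u, w) \<in> edges R"
    then obtain a where a: "a \<in> verts (F C)" "u = Inr (a, C)" unfolding copy_def by blast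
    show "w \<in> copy F C"
    proof (cases w)
      case (Inl y) then show ?thesis using e a by simp
    next
      case (Inr q)
      then have "snd q = C" "(a, fst q) \<in> edges (F C)" using e a by auto
      then show ?thesis using fE[OF assms] unfolding copy_def Inr by (metis image_eqI prod.collapse)
    qed
  qed
  have i: "inj_on (\<lambda>b. Inr (b, C)) (verts (F C))" by (rule inj_onI) simp
  have "isomorphic (verts (F C), edges (F C) \<inter> verts (F C) \<times> verts (F C))
      (copy F C, edges R \<inter> copy F C \<times> copy F C)"
    using iso_image[OF i, of "edges (F C)" "edges R"] assms unfolding copy_def by simp
  moreover have "edges (F C) \<inter> verts (F C) \<times> verts (F C) = edges (F C)"
    using fg[OF assms] unfolding graph_def by blast
  ultimately show "isomorphic (F C) (induced_subgraph R (copy F C))"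
    unfolding induced_subgraph_def by simp
qed

lemma inl_comp:
  assumes "closedg G D" "D \<inter> \<Union>CC = {}"
  shows "closedg R (Inl ` D) \<and> isomorphic (induced_subgraph G D) (induced_subgraph R (Inl ` D))"
proof
  show "closedg R (Inl ` D)"
    unfolding closedg_def
  proof (intro conjI ballI allI impI)
    have "\<forall>a\<in>D. a \<in> verts G \<and> a \<notin> \<Union>CC" using assms unfolding closedg_def by blast
    then show "Inl ` D \<subseteq> verts R" by auto
    fix u w assume u: "u \<in> Inl ` D" and e: "(u, w) \<in> edges R"
    then obtain a where a: "a \<in> D" "u = Inl a" by blast
    show "w \<in> Inl ` D"
    proof (cases w)
      case (Inr q) then show ?thesis using e a by simp
    next
      case (Inl y)
      then have "(a, y) \<in> edges G" using e a by simp
      then have "y \<in> D" using assms(1) a unfolding closedg_def by blast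
      then show ?thesis using Inl by blast
    qed
  qed
  have i: "inj_on Inl D" by (rule inj_onI) simp
  have "\<forall>x\<in>D. \<forall>y\<in>D. (x, y) \<in> edges G \<longleftrightarrow> (Inl x, Inl y) \<in> edges R" using assms(2) by auto
  from iso_image[OF i this] show "isomorphic (induced_subgraph G D) (induced_subgraph R (Inl ` D))"
    unfolding induced_subgraph_def by simp
qed

lemma F_ne: "C \<in> CC \<Longrightarrow> verts (F C) \<noteq> {}"
  using fc unfolding connected_graph_def by blast

lemma R_not_conn:
  assumes "C0 \<in> CC" "D \<in> component_sets G" "D \<noteq> C0"
  shows "\<not> connected_graph R"
proof -
  have cl: "closedg R (copy F C0)" using copy_comp[OF assms(1)] by blast
  obtain b where b: "b \<in> verts (F C0)" using F_ne[OF assms(1)] by blast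
  then have bin: "Inr (b, C0) \<in> copy F C0" unfolding copy_def by blast
  obtain d where d: "d \<in> D" using comp_sets_ne[OF assms(2)] by blast
  have dv: "d \<in> verts G" using cs_sub[OF assms(2)] d by blast
  show ?thesis
  proof (cases "d \<in> \<Union>CC")
    case True
    then obtain C' where C': "C' \<in> CC" "d \<in> C'" by blast
    then have "C' = D" using cs_disj[OF CCcs[OF C'(1)] assms(2)] d by blast
    obtain b' where b': "b' \<in> verts (F C')" using F_ne[OF C'(1)] by blast
    have "Inr (b', C') \<in> verts R" using b' C' by simp
    moreover have "Inr (b', C') \<notin> copy F C0" using \<open>C' = D\<close> assms(3) unfolding copy_def by auto
    ultimately show ?thesis using not_connected[OF cl bin] by blast
  next
    case False
    have "Inl d \<in> verts R" using False dv by simp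
    moreover have "Inl d \<notin> copy F C0" unfolding copy_def by auto
    ultimately show ?thesis using not_connected[OF cl bin] by blast
  qed
qed

lemma R_countable:
  assumes "countable (verts G)" "\<And>C. C \<in> CC \<Longrightarrow> countable (verts (F C))"
  shows "countable (verts R)"
proof -
  have "countable CC"
    using countable_subset[OF cc] assms(1) unfolding comp_sets by blast
  then have "countable (\<Union>C\<in>CC. (\<lambda>b. Inr (b, C)) ` verts (F C))"
    using assms(2) by (intro countable_UN) auto
  moreover have "countable (Inl ` (verts G - \<Union>CC))" using assms(1) by auto
  ultimately show ?thesis unfolding repl_def by simp
qed


lemma R_has_comp_cases:
  fixes K :: "'c ugraph"
  assumes "has_comp R K" "connected_graph K" "graph K"
  shows "(\<exists>D. closedg G D \<and> D \<inter> \<Union>CC = {} \<and> isomorphic K (induced_subgraph G D)) \<or>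
         (\<exists>C\<in>CC. isomorphic K (F C))"
proof -
  obtain A where A: "closedg R A" "isomorphic K (induced_subgraph R A)"
    using assms(1) unfolding has_comp_def by blast
  have co: "connected_graph (induced_subgraph R A)" using iso_connected[OF A(2) assms(2,3)] .
  from R_comp_class[OF A(1) co] show ?thesis
  proof
    assume "\<exists>D. closedg G D \<and> D \<inter> \<Union>CC = {} \<and> A = Inl ` D"
    then obtain D where D: "closedg G D" "D \<inter> \<Union>CC = {}" "A = Inl ` D" by blast
    have "isomorphic (induced_subgraph G D) (induced_subgraph R A)" using inl_comp[OF D(1,2)] D(3) by blast
    then have "isomorphic K (induced_subgraph G D)" using iso_trans[OF A(2) iso_sym] by blast
    then show ?thesis using D by blast
  next
    assume "\<exists>C\<in>CC. A = copy F C"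
    then obtain C where C: "C \<in> CC" "A = copy F C" by blast
    have "isomorphic (F C) (induced_subgraph R A)" using copy_comp[OF C(1)] C(2) by blast
    then have "isomorphic K (F C)" using iso_trans[OF A(2) iso_sym] by blast
    then show ?thesis using C by blast
  qed
qed

lemma R_has_comp_copy: "C \<in> CC \<Longrightarrow> has_comp R (F C)"
  unfolding has_comp_def using copy_comp by blast

lemma R_has_comp_inl:
  assumes "closedg G D" "D \<inter> \<Union>CC = {}" "isomorphic K (induced_subgraph G D)"
  shows "has_comp R K"
proof -
  have "closedg R (Inl ` D)" "isomorphic (induced_subgraph G D) (induced_subgraph R (Inl ` D))"
    using inl_comp[OF assms(1,2)] by blast+
  then show ?thesis unfolding has_comp_def using iso_trans[OF assms(3)] by blast
qed

end


lemma repl_nat: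
  assumes "rctx G CC F" "countable (verts G)" "\<And>C. C \<in> CC \<Longrightarrow> countable (verts (F C))"
  shows "\<exists>Y :: nat ugraph. graph Y \<and> isomorphic (repl G CC F) Y \<and> equimorphic Y G"
proof -
  interpret rctx G CC F by (rule assms(1))
  obtain Y :: "nat ugraph" where Y: "graph Y" "isomorphic R Y"
    using to_nat_graph[OF R_graph R_countable[OF assms(2,3)]] by blast
  have "equimorphic Y G" using equi_trans[OF iso_equi[OF iso_sym[OF Y(2)]] R_equi] .
  then show ?thesis using Y by blast
qed

lemma final_family:
  fixes S' :: "nat ugraph set" and X :: "nat ugraph \<Rightarrow> nat ugraph"
  assumes "infinite S'" "\<And>t. t \<in> S' \<Longrightarrow> graph (X t) \<and> equimorphic (X t) G \<and> (P \<longrightarrow> \<not> connected_graph (X t))"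
    "\<And>t t'. t \<in> S' \<Longrightarrow> t' \<in> S' \<Longrightarrow> t \<noteq> t' \<Longrightarrow> \<not> isomorphic (X t) (X t')"
  shows "\<exists>S :: nat ugraph set. infinite S \<and>
           (\<forall>K\<in>S. graph K \<and> equimorphic K G \<and> (P \<longrightarrow> \<not> connected_graph K)) \<and>
           (\<forall>K1\<in>S. \<forall>K2\<in>S. K1 \<noteq> K2 \<longrightarrow> \<not> isomorphic K1 K2)"
proof -
  have "inj_on X S'"
  proof (rule inj_onI, rule ccontr)
    fix t t' assume "t \<in> S'" "t' \<in> S'" "X t = X t'" "t \<noteq> t'"
    then show False using assms(3) iso_refl by metis
  qed
  then have "infinite (X ` S')" using assms(1) finite_imageD by blast
  moreover have "\<forall>K\<in>X ` S'. graph K \<and> equimorphic K G \<and> (P \<longrightarrow> \<not> connected_graph K)" using assms(2) by blast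
  moreover have "\<forall>K1\<in>X ` S'. \<forall>K2\<in>X ` S'. K1 \<noteq> K2 \<longrightarrow> \<not> isomorphic K1 K2" using assms(3) by blast
  ultimately show ?thesis by blast
qed


lemma countable_nat_set: "countable (A :: nat set)"
  by (rule countableI_type)

theorem lemma2p2:
  fixes G :: "'a ugraph" and H :: "'a ugraph"
  assumes "graph G" and "countable (verts G)"
    and "H \<in> components G"
    and "\<exists>S :: nat ugraph set. infinite S \<and>
           (\<forall>K\<in>S. graph K \<and> connected_graph K \<and> equimorphic K H) \<and>
           (\<forall>K1\<in>S. \<forall>K2\<in>S. K1 \<noteq> K2 \<longrightarrow> \<not> isomorphic K1 K2)"
  shows "(\<exists>S :: nat ugraph set. infinite S \<and>
           (\<forall>K\<in>S. graph K \<and> equimorphic K G) \<and>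
           (\<forall>K1\<in>S. \<forall>K2\<in>S. K1 \<noteq> K2 \<longrightarrow> \<not> isomorphic K1 K2))
       \<and> ((\<exists>C1\<in>components G. \<exists>C2\<in>components G. C1 \<noteq> C2) \<longrightarrow>
          (\<exists>S :: nat ugraph set. infinite S \<and>
           (\<forall>K\<in>S. graph K \<and> equimorphic K G \<and> \<not> connected_graph K) \<and>
           (\<forall>K1\<in>S. \<forall>K2\<in>S. K1 \<noteq> K2 \<longrightarrow> \<not> isomorphic K1 K2)))"
proof -
  note g = assms(1)
  obtain S0 :: "nat ugraph set" where S0inf: "infinite S0"
    and S0p: "\<And>K. K \<in> S0 \<Longrightarrow> graph K \<and> connected_graph K \<and> equimorphic K H"
    and S0n: "\<And>K1 K2. K1 \<in> S0 \<Longrightarrow> K2 \<in> S0 \<Longrightarrow> K1 \<noteq> K2 \<Longrightarrow> \<not> isomorphic K1 K2"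
    using assms(4) by blast
  obtain C0 where C0: "C0 \<in> component_sets G" "H = induced_subgraph G C0"
    using assms(3) unfolding components_def by blast
  have gH: "graph H" using induced_graph[OF g] C0(2) by simp
  have cH: "connected_graph H" using comp_sets_conn[OF g C0(1)] C0(2) by simp
  have C0sub: "C0 \<subseteq> verts G" using comp_sets_closed[OF g C0(1)] unfolding closedg_def by blast
  have ctH: "countable (verts H)" using countable_subset[OF C0sub assms(2)] C0(2)
    unfolding induced_subgraph_def by simp
  define P where "P = (\<exists>C1\<in>components G. \<exists>C2\<in>components G. C1 \<noteq> C2)"
  have other: "\<exists>D\<in>component_sets G. D \<noteq> C" if P for C
  proof -
    obtain D1 D2 where D: "D1 \<in> component_sets G" "D2 \<in> component_sets G"
      "induced_subgraph G D1 \<noteq> induced_subgraph G D2"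
      using \<open>P\<close> unfolding P_def components_def by blast
    then have "D1 \<noteq> D2" by blast
    then show ?thesis using D(1,2) by blast
  qed
  have main: "\<exists>S :: nat ugraph set. infinite S \<and>
           (\<forall>K\<in>S. graph K \<and> equimorphic K G \<and> (P \<longrightarrow> \<not> connected_graph K)) \<and>
           (\<forall>K1\<in>S. \<forall>K2\<in>S. K1 \<noteq> K2 \<longrightarrow> \<not> isomorphic K1 K2)"
  proof (cases "infinite {K\<in>S0. \<not> has_comp G K}")
    case True
    define SA where "SA = {K\<in>S0. \<not> has_comp G K}"
    have rc: "rctx G {C0} (\<lambda>_. t)" if t: "t \<in> SA" for t
    proof
      show "graph G" by (rule g)
      show "{C0} \<subseteq> component_sets G" using C0(1) by blast
      fix C assume "C \<in> {C0}"
      then show "graph t" "connected_graph t" "equimorphic t (induced_subgraph G C)"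
        using S0p t C0(2) unfolding SA_def by auto
    qed
    have "\<exists>Y :: nat ugraph. graph Y \<and> isomorphic (repl G {C0} (\<lambda>_. t)) Y \<and> equimorphic Y G"
      if "t \<in> SA" for t
      using repl_nat[OF rc[OF that] assms(2) countable_nat_set] .
    then have "\<forall>t\<in>SA. \<exists>Y :: nat ugraph. graph Y \<and> isomorphic (repl G {C0} (\<lambda>_. t)) Y \<and> equimorphic Y G" by blast
    from bchoice[OF this] obtain X :: "nat ugraph \<Rightarrow> nat ugraph" where
      X0: "\<forall>t\<in>SA. graph (X t) \<and> isomorphic (repl G {C0} (\<lambda>_. t)) (X t) \<and> equimorphic (X t) G" by blast
    have X: "graph (X t) \<and> isomorphic (repl G {C0} (\<lambda>_. t)) (X t) \<and> equimorphic (X t) G" if "t \<in> SA" for t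
      using X0 that by blast
    have hc: "has_comp (X t) t" if t: "t \<in> SA" for t
    proof -
      interpret rctx G "{C0}" "\<lambda>_. t" by (rule rc[OF t])
      have "has_comp R t" using R_has_comp_copy[of C0] by simp
      then show ?thesis using has_comp_iso X[OF t] by blast
    qed
    have nhc: "\<not> has_comp (X t') t" if t: "t \<in> SA" and t': "t' \<in> SA" and ne: "t \<noteq> t'" for t t'
    proof
      interpret rctx G "{C0}" "\<lambda>_. t'" by (rule rc[OF t'])
      assume "has_comp (X t') t"
      then have "has_comp R t" using has_comp_iso[OF _ iso_sym R_graph] X[OF t'] by blast
      moreover have "connected_graph t" "graph t" using S0p t unfolding SA_def by auto
      ultimately have "(\<exists>D. closedg G D \<and> D \<inter> \<Union>{C0} = {} \<and> isomorphic t (induced_subgraph G D)) \<or>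
         (\<exists>C\<in>{C0}. isomorphic t t')" using R_has_comp_cases by blast
      then show False
      proof
        assume "\<exists>D. closedg G D \<and> D \<inter> \<Union>{C0} = {} \<and> isomorphic t (induced_subgraph G D)"
        then have "has_comp G t" unfolding has_comp_def by blast
        then show False using t unfolding SA_def by blast
      next
        assume "\<exists>C\<in>{C0}. isomorphic t t'"
        then show False using S0n t t' ne unfolding SA_def by blast
      qed
    qed
    show ?thesis
    proof (rule final_family[of SA])
      show "infinite SA" using True unfolding SA_def .
      fix t assume t: "t \<in> SA"
      interpret rctx G "{C0}" "\<lambda>_. t" by (rule rc[OF t])
      have "P \<longrightarrow> \<not> connected_graph (X t)"
      proof
        assume P
        then obtain D where "D \<in> component_sets G" "D \<noteq> C0" using other by blast
        then have nc: "\<not> connected_graph R" using R_not_conn[of C0 D] by simp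
        show "\<not> connected_graph (X t)"
        proof
          assume "connected_graph (X t)"
          then have "connected_graph R" using iso_connected[OF iso_sym] X[OF t] by blast
          then show False using nc by blast
        qed
      qed
      then show "graph (X t) \<and> equimorphic (X t) G \<and> (P \<longrightarrow> \<not> connected_graph (X t))" using X[OF t] by blast
    next
      fix t t' assume t: "t \<in> SA" and t': "t' \<in> SA" and ne: "t \<noteq> t'"
      show "\<not> isomorphic (X t) (X t')"
      proof
        assume "isomorphic (X t) (X t')"
        then have "has_comp (X t') t" using has_comp_iso[OF hc[OF t]] X[OF t'] by blast
        then show False using nhc[OF t t' ne] by blast
      qed
    qed
  next
    case False
    define SB where "SB = {K\<in>S0. has_comp G K \<and> \<not> isomorphic K H}"
    have S0eq: "S0 = {K\<in>S0. \<not> has_comp G K} \<union> {K\<in>S0. has_comp G K}" by blast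
    have f1: "finite {K\<in>S0. \<not> has_comp G K}" using False by simp
    have inf1: "infinite {K\<in>S0. has_comp G K}"
    proof
      assume f2: "finite {K\<in>S0. has_comp G K}"
      have "finite S0" using finite_UnI[OF f1 f2] S0eq by simp
      then show False using S0inf by simp
    qed
    have fin2: "finite {K\<in>S0. isomorphic K H}"
    proof (cases "{K\<in>S0. isomorphic K H} = {}")
      case True then show ?thesis by (simp only: True finite.emptyI)
    next
      case False
      then obtain K0 where K0: "K0 \<in> S0" "isomorphic K0 H" by blast
      have "{K\<in>S0. isomorphic K H} \<subseteq> {K0}"
      proof
        fix K assume K: "K \<in> {K\<in>S0. isomorphic K H}"
        then have "isomorphic K K0" using iso_trans[OF _ iso_sym[OF K0(2)]] by blast
        then show "K \<in> {K0}" using S0n K K0(1) by blast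
      qed
      then show ?thesis using finite_subset by blast
    qed
    have "{K\<in>S0. has_comp G K} \<subseteq> SB \<union> {K\<in>S0. isomorphic K H}" unfolding SB_def by blast
    then have SBinf: "infinite SB" using inf1 fin2 by (meson finite_UnI finite_subset)
    define CCt where "CCt t = {C\<in>component_sets G. isomorphic t (induced_subgraph G C)}" for t :: "nat ugraph"
    have rc: "rctx G (CCt t) (\<lambda>_. H)" if t: "t \<in> SB" for t
    proof
      show "graph G" by (rule g)
      show "CCt t \<subseteq> component_sets G" unfolding CCt_def by blast
      fix C assume C: "C \<in> CCt t"
      show "graph H" by (rule gH)
      show "connected_graph H" by (rule cH)
      have "equimorphic t H" using S0p t unfolding SB_def by blast
      moreover have "isomorphic t (induced_subgraph G C)" using C unfolding CCt_def by blast
      ultimately show "equimorphic H (induced_subgraph G C)"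
        using equi_trans[OF equi_sym iso_equi] by blast
    qed
    have "\<exists>Y :: nat ugraph. graph Y \<and> isomorphic (repl G (CCt t) (\<lambda>_. H)) Y \<and> equimorphic Y G"
      if "t \<in> SB" for t
      using repl_nat[OF rc[OF that] assms(2) ctH] .
    then have "\<forall>t\<in>SB. \<exists>Y :: nat ugraph. graph Y \<and> isomorphic (repl G (CCt t) (\<lambda>_. H)) Y \<and> equimorphic Y G" by blast
    from bchoice[OF this] obtain X :: "nat ugraph \<Rightarrow> nat ugraph" where
      X0: "\<forall>t\<in>SB. graph (X t) \<and> isomorphic (repl G (CCt t) (\<lambda>_. H)) (X t) \<and> equimorphic (X t) G" by blast
    have X: "graph (X t) \<and> isomorphic (repl G (CCt t) (\<lambda>_. H)) (X t) \<and> equimorphic (X t) G" if "t \<in> SB" for t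
      using X0 that by blast
    have tprop: "graph t \<and> connected_graph t \<and> has_comp G t \<and> \<not> isomorphic t H" if "t \<in> SB" for t
      using that S0p unfolding SB_def by blast
    have compof: "\<exists>A. A \<in> component_sets G \<and> isomorphic t (induced_subgraph G A)" if t: "t \<in> SB" for t
    proof -
      obtain A where A: "closedg G A" "isomorphic t (induced_subgraph G A)"
        using tprop[OF t] unfolding has_comp_def by blast
      have "connected_graph (induced_subgraph G A)" using iso_connected[OF A(2)] tprop[OF t] by blast
      then have "A \<in> component_sets G" using comp_sets_char[OF g A(1)] by blast
      then show ?thesis using A(2) by blast
    qed
    have nhc: "\<not> has_comp (X t) t" if t: "t \<in> SB" for t
    proof
      interpret rctx G "CCt t" "\<lambda>_. H" by (rule rc[OF t])
      assume "has_comp (X t) t"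
      then have "has_comp R t" using has_comp_iso[OF _ iso_sym R_graph] X[OF t] by blast
      then have "(\<exists>D. closedg G D \<and> D \<inter> \<Union>(CCt t) = {} \<and> isomorphic t (induced_subgraph G D)) \<or>
         (\<exists>C\<in>CCt t. isomorphic t H)" using R_has_comp_cases tprop[OF t] by blast
      then show False
      proof
        assume "\<exists>D. closedg G D \<and> D \<inter> \<Union>(CCt t) = {} \<and> isomorphic t (induced_subgraph G D)"
        then obtain D where D: "closedg G D" "D \<inter> \<Union>(CCt t) = {}" "isomorphic t (induced_subgraph G D)"
          by blast
        have "connected_graph (induced_subgraph G D)" using iso_connected[OF D(3)] tprop[OF t] by blast
        then have Dc: "D \<in> component_sets G" using comp_sets_char[OF g D(1)] by blast
        then have "D \<in> CCt t" using D(3) unfolding CCt_def by blast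
        then show False using D(2) comp_sets_ne[OF Dc] by blast
      next
        assume "\<exists>C\<in>CCt t. isomorphic t H"
        then show False using tprop[OF t] by blast
      qed
    qed
    have hc: "has_comp (X t) t'" if t: "t \<in> SB" and t': "t' \<in> SB" and ne: "t \<noteq> t'" for t t'
    proof -
      interpret rctx G "CCt t" "\<lambda>_. H" by (rule rc[OF t])
      obtain A where A: "A \<in> component_sets G" "isomorphic t' (induced_subgraph G A)"
        using compof[OF t'] by blast
      have "A \<inter> \<Union>(CCt t) = {}"
      proof (rule ccontr)
        assume "A \<inter> \<Union>(CCt t) \<noteq> {}"
        then obtain x C where x: "x \<in> A" "C \<in> CCt t" "x \<in> C" by blast
        then have "C \<in> component_sets G" unfolding CCt_def by blast
        then have "A = C" using cs_disj[OF A(1)] x by blast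
        then have "isomorphic t (induced_subgraph G A)" using x(2) unfolding CCt_def by blast
        then have "isomorphic t t'" using iso_trans[OF _ iso_sym[OF A(2)]] by blast
        then show False using S0n t t' ne unfolding SB_def by blast
      qed
      then have "has_comp R t'" using R_has_comp_inl[OF comp_sets_closed[OF g A(1)] _ A(2)] by blast
      then show ?thesis using has_comp_iso X[OF t] by blast
    qed
    show ?thesis
    proof (rule final_family[of SB])
      show "infinite SB" by (rule SBinf)
      fix t assume t: "t \<in> SB"
      interpret rctx G "CCt t" "\<lambda>_. H" by (rule rc[OF t])
      have "P \<longrightarrow> \<not> connected_graph (X t)"
      proof
        assume P
        obtain A where A: "A \<in> component_sets G" "isomorphic t (induced_subgraph G A)"
          using compof[OF t] by blast
        then have AC: "A \<in> CCt t" unfolding CCt_def by blast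
        obtain D where "D \<in> component_sets G" "D \<noteq> A" using other[OF \<open>P\<close>] by blast
        then have nc: "\<not> connected_graph R" using R_not_conn[OF AC] by simp
        show "\<not> connected_graph (X t)"
        proof
          assume "connected_graph (X t)"
          then have "connected_graph R" using iso_connected[OF iso_sym] X[OF t] by blast
          then show False using nc by blast
        qed
      qed
      then show "graph (X t) \<and> equimorphic (X t) G \<and> (P \<longrightarrow> \<not> connected_graph (X t))" using X[OF t] by blast
    next
      fix t t' assume t: "t \<in> SB" and t': "t' \<in> SB" and ne: "t \<noteq> t'"
      show "\<not> isomorphic (X t) (X t')"
      proof
        assume "isomorphic (X t) (X t')"
        then have "has_comp (X t') t'" using has_comp_iso[OF hc[OF t t' ne]] X[OF t'] by blast
        then show False using nhc[OF t'] by blast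
      qed
    qed
  qed
  then obtain S :: "nat ugraph set" where S: "infinite S"
    "\<forall>K\<in>S. graph K \<and> equimorphic K G \<and> (P \<longrightarrow> \<not> connected_graph K)"
    "\<forall>K1\<in>S. \<forall>K2\<in>S. K1 \<noteq> K2 \<longrightarrow> \<not> isomorphic K1 K2" by blast
  have c1: "\<exists>S :: nat ugraph set. infinite S \<and>
           (\<forall>K\<in>S. graph K \<and> equimorphic K G) \<and>
           (\<forall>K1\<in>S. \<forall>K2\<in>S. K1 \<noteq> K2 \<longrightarrow> \<not> isomorphic K1 K2)"
    using S by blast
  have c2: "\<exists>S :: nat ugraph set. infinite S \<and>
           (\<forall>K\<in>S. graph K \<and> equimorphic K G \<and> \<not> connected_graph K) \<and>
           (\<forall>K1\<in>S. \<forall>K2\<in>S. K1 \<noteq> K2 \<longrightarrow> \<not> isomorphic K1 K2)" if P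
    using S \<open>P\<close> by blast
  show ?thesis using c1 c2 unfolding P_def by blast
qed

end
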